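(* Let $\Sigma\subseteq\mathcal A^{\mathbf N}$ be a one-sided subshift over a finite alphabet $\mathcal A$ that has a finite subset $F$ with dense orbit. If the complexity function $p$ of the language of $\Sigma$ is unbounded, then this language is almost prolongable.
   Context: $\Sigma$ is closed and invariant under the shift $S$. $F\subseteq\Sigma$ has dense orbit if $\bigcup_{\omega\in F}\{S^m\omega:m\ge0\}$ is dense in $\Sigma$. The language of $\Sigma$ is the set of finite words occurring as subwords of elements of $\Sigma$; $p(n)$ is the number of its words of length $n$. A word $v$ of a language $\mathcal L$ is left-prolongable (resp. right-prolongable) if $av\in\mathcal L$ (resp. $va\in\mathcal L$) for some letter $a$; $\mathcal L$ is almost prolongable if the proportions of left-prolongable and of right-prolongable words among its words of length $n$ both tend to $1$ as $n\to\infty$. *)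

theory Defs
  imports "HOL-Analysis.Analysis"
begin

definition seq_top :: "'a set \<Rightarrow> (nat \<Rightarrow> 'a) topology" where
  "seq_top A = product_topology (\<lambda>_. discrete_topology A) UNIV"

definition shift :: "(nat \<Rightarrow> 'a) \<Rightarrow> (nat \<Rightarrow> 'a)" where
  "shift \<omega> = (\<lambda>n. \<omega> (Suc n))"

definition subshift :: "'a set \<Rightarrow> (nat \<Rightarrow> 'a) set \<Rightarrow> bool" where
  "subshift A Sig \<longleftrightarrow> finite A \<and> Sig \<subseteq> topspace (seq_top A)
     \<and> closedin (seq_top A) Sig \<and> shift ` Sig \<subseteq> Sig"

definition orbit_set :: "(nat \<Rightarrow> 'a) set \<Rightarrow> (nat \<Rightarrow> 'a) set" where
  "orbit_set F = (\<Union>\<omega>\<in>F. {(shift ^^ m) \<omega> | m. True})"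

definition has_dense_orbit :: "'a set \<Rightarrow> (nat \<Rightarrow> 'a) set \<Rightarrow> (nat \<Rightarrow> 'a) set \<Rightarrow> bool" where
  "has_dense_orbit A Sig F \<longleftrightarrow> F \<subseteq> Sig \<and>
     (subtopology (seq_top A) Sig) closure_of (orbit_set F) = Sig"

definition language :: "(nat \<Rightarrow> 'a) set \<Rightarrow> 'a list set" where
  "language Sig = {w. \<exists>\<omega>\<in>Sig. \<exists>i. w = map \<omega> [i..<i + length w]}"

definition complexity :: "'a list set \<Rightarrow> nat \<Rightarrow> nat" where
  "complexity L n = card {w\<in>L. length w = n}"

definition left_prolongable :: "'a list set \<Rightarrow> 'a list \<Rightarrow> bool" where
  "left_prolongable L v \<longleftrightarrow> (\<exists>a. a # v \<in> L)"

definition right_prolongable :: "'a list set \<Rightarrow> 'a list \<Rightarrow> bool" where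
  "right_prolongable L v \<longleftrightarrow> (\<exists>a. v @ [a] \<in> L)"

definition almost_prolongable :: "'a list set \<Rightarrow> bool" where
  "almost_prolongable L \<longleftrightarrow>
     ((\<lambda>n. real (card {v\<in>L. length v = n \<and> left_prolongable L v}) / real (complexity L n))
        \<longlonglongrightarrow> 1) \<and>
     ((\<lambda>n. real (card {v\<in>L. length v = n \<and> right_prolongable L v}) / real (complexity L n))
        \<longlonglongrightarrow> 1)"

end

theory Submission
  imports Defs
begin

lemma sig_in_A:
  assumes "subshift A Sig" "\<omega> \<in> Sig" shows "\<omega> k \<in> A"
  using assms unfolding subshift_def seq_top_def by (auto simp: PiE_iff)

lemma shift_pow: "(shift ^^ m) f k = f (m + k)"
  by (induction m arbitrary: k) (auto simp: shift_def)

lemma lang_words_finite: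
  assumes "subshift A Sig"
  shows "finite {w\<in>language Sig. length w = n}"
proof -
  have "{w\<in>language Sig. length w = n} \<subseteq> {w. set w \<subseteq> A \<and> length w = n}"
  proof
    fix w assume "w \<in> {w\<in>language Sig. length w = n}"
    then obtain \<omega> i where "\<omega> \<in> Sig" "w = map \<omega> [i..<i + length w]" "length w = n"
      by (auto simp: language_def)
    then show "w \<in> {w. set w \<subseteq> A \<and> length w = n}"
    proof -
      have "set w \<subseteq> A"
      proof
        fix a assume "a \<in> set w"
        then obtain j where "a = \<omega> j" using \<open>w = map \<omega> [i..<i + length w]\<close>
          by (metis ex_map_conv)
        then show "a \<in> A" using sig_in_A[OF assms \<open>\<omega> \<in> Sig\<close>] by simp
      qed
      then show ?thesis using \<open>length w = n\<close> by simp
    qed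
  qed
  moreover have "finite {w. set w \<subseteq> A \<and> length w = n}"
    using assms finite_lists_length_eq unfolding subshift_def by blast
  ultimately show ?thesis by (rule finite_subset)
qed

lemma right_all:
  assumes "w \<in> language Sig" shows "right_prolongable (language Sig) w"
proof -
  obtain \<omega> i where "\<omega> \<in> Sig" "w = map \<omega> [i..<i + length w]"
    using assms by (auto simp: language_def)
  then have "w @ [\<omega> (i + length w)] = map \<omega> [i..<i + length (w @ [\<omega> (i + length w)])]"
    by simp
  then show ?thesis using \<open>\<omega> \<in> Sig\<close> unfolding right_prolongable_def language_def by blast
qed

lemma compl_mono:
  assumes "subshift A Sig"
  shows "complexity (language Sig) n \<le> complexity (language Sig) (Suc n)"
proof -
  let ?L = "language Sig"
  have "{w\<in>?L. length w = n} \<subseteq> butlast ` {w\<in>?L. length w = Suc n}"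
  proof
    fix w assume "w \<in> {w\<in>?L. length w = n}"
    then obtain a where "w @ [a] \<in> ?L" "length w = n"
      using right_all unfolding right_prolongable_def by blast
    then show "w \<in> butlast ` {w\<in>?L. length w = Suc n}"
      by (metis (mono_tags, lifting) butlast_snoc image_eqI length_append_singleton mem_Collect_eq)
  qed
  then have "card {w\<in>?L. length w = n} \<le> card (butlast ` {w\<in>?L. length w = Suc n})"
    by (intro card_mono finite_imageI lang_words_finite[OF assms])
  also have "\<dots> \<le> card {w\<in>?L. length w = Suc n}" by (rule card_image_le[OF lang_words_finite[OF assms]])
  finally show ?thesis unfolding complexity_def .
qed

lemma nonleft_bound:
  assumes S: "subshift A Sig" and D: "has_dense_orbit A Sig F"
  shows "{v\<in>language Sig. length v = n \<and> \<not> left_prolongable (language Sig) v}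
           \<subseteq> (\<lambda>f. map f [0..<n]) ` F"
proof
  let ?L = "language Sig"
  let ?T = "seq_top A"
  fix w assume "w \<in> {v\<in>?L. length v = n \<and> \<not> left_prolongable ?L v}"
  then have wL: "w \<in> ?L" and len: "length w = n" and nl: "\<not> left_prolongable ?L w" by auto
  obtain \<omega> i where om: "\<omega> \<in> Sig" and wi: "w = map \<omega> [i..<i + n]"
    using wL len by (auto simp: language_def)
  have wA: "w ! k \<in> A" if "k < n" for k using wi that sig_in_A[OF S om] by simp
  define C where "C = (\<Inter>k\<in>{..<n}. {x \<in> topspace ?T. x k \<in> {w ! k}}) \<inter> topspace ?T"
  have "openin ?T C" unfolding C_def
  proof (rule openin_INT)
    fix k assume "k \<in> {..<n}"
    then show "openin ?T {x \<in> topspace ?T. x k \<in> {w ! k}}"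
      unfolding seq_top_def
      by (intro openin_continuous_map_preimage[OF continuous_map_product_projection])
         (auto simp: wA)
  qed simp
  then have oC: "openin (subtopology ?T Sig) (C \<inter> Sig)"
    unfolding openin_subtopology by blast
  have ST: "Sig \<subseteq> topspace ?T" using S by (simp add: subshift_def)
  have "(shift ^^ i) \<omega> \<in> Sig"
  proof (induction i)
    case 0 then show ?case using om by simp
  next
    case (Suc i) then show ?case using S by (auto simp: subshift_def)
  qed
  moreover have "(shift ^^ i) \<omega> \<in> C"
    unfolding C_def using calculation ST by (auto simp: shift_pow wi)
  ultimately have "(shift ^^ i) \<omega> \<in> (subtopology ?T Sig) closure_of (orbit_set F)"
    using D by (simp add: has_dense_orbit_def)
  then obtain y where y: "y \<in> orbit_set F" "y \<in> C \<inter> Sig"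
    using oC \<open>(shift ^^ i) \<omega> \<in> Sig\<close> \<open>(shift ^^ i) \<omega> \<in> C\<close> unfolding in_closure_of by blast
  then obtain f m where f: "f \<in> F" "y = (shift ^^ m) f" by (auto simp: orbit_set_def)
  have fS: "f \<in> Sig" using f D by (auto simp: has_dense_orbit_def)
  have wf: "w = map f [m..<m + n]"
    using y f len unfolding C_def by (intro nth_equalityI) (auto simp: shift_pow)
  have "m = 0"
  proof (rule ccontr)
    assume "m \<noteq> 0"
    then have "f (m - 1) # w = map f [m - 1..<m - 1 + length (f (m - 1) # w)]"
      using wf len by (simp add: upt_rec)
    then have "f (m - 1) # w \<in> ?L" unfolding language_def mem_Collect_eq by (rule bexI[OF exI fS])
    then show False using nl unfolding left_prolongable_def by blast
  qed
  then show "w \<in> (\<lambda>f. map f [0..<n]) ` F" using wf f by auto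
qed

theorem proposition2p14:
  fixes A :: "'a set" and Sig F :: "(nat \<Rightarrow> 'a) set"
  assumes "subshift A Sig"
    and "finite F" and "has_dense_orbit A Sig F"
    and "\<forall>B. \<exists>n. complexity (language Sig) n > B"
  shows "almost_prolongable (language Sig)"
proof -
  let ?L = "language Sig"
  let ?p = "complexity ?L"
  have mono: "?p m \<le> ?p n" if "m \<le> n" for m n
    using that by (induction n rule: dec_induct) (auto intro: le_trans compl_mono[OF assms(1)])
  have ev: "eventually (\<lambda>n. B < ?p n) sequentially" for B
  proof -
    obtain m where "B < ?p m" using assms(4) by blast
    then show ?thesis unfolding eventually_sequentially
      by (meson less_le_trans mono)
  qed
  have lim_inf: "filterlim (\<lambda>n. real (?p n)) at_infinity sequentially"
  proof (rule filterlim_at_top_imp_at_infinity, unfold filterlim_at_top, intro allI)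
    fix Z :: real
    show "eventually (\<lambda>n. Z \<le> real (?p n)) sequentially"
      using ev[of "nat \<lceil>Z\<rceil>"] by (rule eventually_mono) linarith
  qed
  have pos: "eventually (\<lambda>n. 0 < ?p n) sequentially" using ev[of 0] .
  define c where "c = real (card F)"
  have lim1: "(\<lambda>n. 1 - c / real (?p n)) \<longlonglongrightarrow> 1"
    using tendsto_diff[OF tendsto_const tendsto_divide_0[OF tendsto_const lim_inf], of 1 c] by simp
  have left: "(\<lambda>n. real (card {v\<in>?L. length v = n \<and> left_prolongable ?L v}) / real (?p n)) \<longlonglongrightarrow> 1"
  proof (rule tendsto_sandwich[OF _ _ lim1 tendsto_const])
    show "eventually (\<lambda>n. real (card {v\<in>?L. length v = n \<and> left_prolongable ?L v}) / real (?p n) \<le> 1) sequentially"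
    proof (rule eventually_mono[OF pos])
      fix n assume "0 < ?p n"
      have "card {v\<in>?L. length v = n \<and> left_prolongable ?L v} \<le> ?p n"
        unfolding complexity_def by (intro card_mono lang_words_finite[OF assms(1)]) auto
      then show "real (card {v\<in>?L. length v = n \<and> left_prolongable ?L v}) / real (?p n) \<le> 1"
        using \<open>0 < ?p n\<close> by simp
    qed
    show "eventually (\<lambda>n. 1 - c / real (?p n) \<le> real (card {v\<in>?L. length v = n \<and> left_prolongable ?L v}) / real (?p n)) sequentially"
    proof (rule eventually_mono[OF pos])
      fix n assume p0: "0 < ?p n"
      let ?W = "{w\<in>?L. length w = n}"
      let ?G = "{v\<in>?L. length v = n \<and> left_prolongable ?L v}"
      let ?N = "{v\<in>?L. length v = n \<and> \<not> left_prolongable ?L v}"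
      have fin: "finite ?W" by (rule lang_words_finite[OF assms(1)])
      have "?W = ?G \<union> ?N" by auto
      moreover have "?G \<inter> ?N = {}" by auto
      ultimately have "card ?W = card ?G + card ?N"
        using fin by (metis (no_types, lifting) card_Un_disjoint finite_Un)
      moreover have "card ?N \<le> card F"
        using card_mono[OF finite_imageI[OF assms(2)] nonleft_bound[OF assms(1,3), of n]]
              card_image_le[OF assms(2), of "\<lambda>f. map f [0..<n]"] by linarith
      ultimately have "real (?p n) - c \<le> real (card ?G)"
        unfolding complexity_def c_def by linarith
      then show "1 - c / real (?p n) \<le> real (card ?G) / real (?p n)"
      proof -
        have "1 - c / real (?p n) = (real (?p n) - c) / real (?p n)" using p0 by (simp add: field_simps)
        also have "\<dots> \<le> real (card ?G) / real (?p n)"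
          by (rule divide_right_mono) (use \<open>real (?p n) - c \<le> real (card ?G)\<close> in auto)
        finally show ?thesis .
      qed
    qed
  qed
  have right: "(\<lambda>n. real (card {v\<in>?L. length v = n \<and> right_prolongable ?L v}) / real (?p n)) \<longlonglongrightarrow> 1"
  proof (rule tendsto_eventually)
    show "eventually (\<lambda>n. real (card {v\<in>?L. length v = n \<and> right_prolongable ?L v}) / real (?p n) = 1) sequentially"
    proof (rule eventually_mono[OF pos])
      fix n assume "0 < ?p n"
      have "{v\<in>?L. length v = n \<and> right_prolongable ?L v} = {v\<in>?L. length v = n}"
        using right_all by blast
      then show "real (card {v\<in>?L. length v = n \<and> right_prolongable ?L v}) / real (?p n) = 1"
        using \<open>0 < ?p n\<close> unfolding complexity_def by simp
    qed
  qed
  show ?thesis unfolding almost_prolongable_def using left right by blast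
qed

end
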